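(* Let $V=V_{\bar0}\oplus V_{\bar1}$ be an $\mathcal{L}$-module which is free of rank $2$ as a $\mathbb{C}[L_{0,0}]$-module, with homogeneous basis elements $1_{\bar0}\in V_{\bar0}$ and $1_{\bar1}\in V_{\bar1}$; write $f(t)1_{\bar0}:=f(L_{0,0})1_{\bar0}$ and $g(x)1_{\bar1}:=g(L_{0,0})1_{\bar1}$ for polynomials $f,g$. Suppose $\lambda\in\mathbb{C}^*$ and $a,b\in\mathbb{C}$ are such that for all $f\in\mathbb{C}[t]$, $g\in\mathbb{C}[x]$, $m\in\mathbb{Z}$, $i\in\mathbb{Z}_+$: $L_{m,i}f(t)1_{\bar0}=\lambda^m(\delta_{i,0}(t-mqa)+\delta_{q,-1}\delta_{i,1}b)f(t-mq)1_{\bar0}$, $L_{m,i}g(x)1_{\bar1}=\lambda^m(\delta_{i,0}(x-mq(a+\frac12))+\delta_{q,-1}\delta_{i,1}b)g(x-mq)1_{\bar1}$, and moreover $G_{\frac12,0}1_{\bar0}=1_{\bar1}$, $G_{\frac12,1}1_{\bar0}=0$, $G_{\frac12,0}1_{\bar1}=q\lambda(t-qa)1_{\bar0}$, $G_{\frac12,1}1_{\bar1}=2q\lambda\delta_{q,-1}b1_{\bar0}$. Then for all $m\in\frac12+\mathbb{Z}$ and $i\in\mathbb{Z}_+$: $$G_{m,i}1_{\bar0}=\lambda^{m-\frac12}\delta_{i,0}1_{\bar1},\qquad G_{m,i}1_{\bar1}=q\lambda^{m+\frac12}\big(\delta_{i,0}(t-2mqa)+2\delta_{q,-1}\delta_{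i,1}b\big)1_{\bar0}.$$
   Context: Fix $q\in\mathbb{C}^*$; $\mathbb{Z}_+=\{0,1,2,\dots\}$; $\delta$ is the Kronecker delta. The Neveu-Schwarz-Block algebra $\mathcal{L}$ is the Lie superalgebra over $\mathbb{C}$ with even basis $\{L_{m,i}\mid m\in\mathbb{Z},i\in\mathbb{Z}_+\}$, odd basis $\{G_{l,j}\mid l\in\frac12+\mathbb{Z},j\in\mathbb{Z}_+\}$ and brackets $[L_{m,i},L_{n,j}]=(n(i+q)-m(j+q))L_{m+n,i+j}$, $[L_{m,i},G_{l,j}]=(l(i+q)-m(j+\frac{q}{2}))G_{m+l,i+j}$, $[G_{l,i},G_{r,j}]=2qL_{l+r,i+j}$. Modules are supermodules. $L_{0,0}$ acts on $V_{\bar0}=\mathbb{C}[L_{0,0}]1_{\bar0}\cong\mathbb{C}[t]$ as multiplication by $t$ and on $V_{\bar1}=\mathbb{C}[L_{0,0}]1_{\bar1}\cong\mathbb{C}[x]$ as multiplication by $x$. *)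

theory Defs
  imports "HOL-Computational_Algebra.Polynomial"
begin

text \<open>The module V = V_0 (+) V_1 with V_0 = C[t] 1_0 and V_1 = C[x] 1_1, L_{0,0} acting as
multiplication by the variable, is represented by pairs (f, g) of complex polynomials,
(f, g) standing for f(L_{0,0}) 1_0 + g(L_{0,0}) 1_1.
Odd index l = k + 1/2 in 1/2 + Z is encoded by the integer k.\<close>

type_synonym vec = "complex poly \<times> complex poly"

definition vadd :: "vec \<Rightarrow> vec \<Rightarrow> vec" where
  "vadd v w = (fst v + fst w, snd v + snd w)"

definition vsmult :: "complex \<Rightarrow> vec \<Rightarrow> vec" where
  "vsmult c v = (smult c (fst v), smult c (snd v))"

definition vdiff :: "vec \<Rightarrow> vec \<Rightarrow> vec" where
  "vdiff v w = (fst v - fst w, snd v - snd w)"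

definition delta :: "'a \<Rightarrow> 'a \<Rightarrow> complex" where
  "delta x y = (if x = y then 1 else 0)"

text \<open>L m i is the action of L_{m,i}; G k j is the action of G_{k+1/2, j}.\<close>

definition is_NSB_module ::
  "complex \<Rightarrow> (int \<Rightarrow> nat \<Rightarrow> vec \<Rightarrow> vec) \<Rightarrow> (int \<Rightarrow> nat \<Rightarrow> vec \<Rightarrow> vec) \<Rightarrow> bool" where
  "is_NSB_module q L G \<longleftrightarrow>
     (\<forall>m i v w. L m i (vadd v w) = vadd (L m i v) (L m i w)) \<and>
     (\<forall>m i c v. L m i (vsmult c v) = vsmult c (L m i v)) \<and>
     (\<forall>k j v w. G k j (vadd v w) = vadd (G k j v) (G k j w)) \<and>
     (\<forall>k j c v. G k j (vsmult c v) = vsmult c (G k j v)) \<and>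
     (\<forall>m i f. snd (L m i (f, 0)) = 0) \<and>
     (\<forall>m i g. fst (L m i (0, g)) = 0) \<and>
     (\<forall>k j f. fst (G k j (f, 0)) = 0) \<and>
     (\<forall>k j g. snd (G k j (0, g)) = 0) \<and>
     (\<forall>m i n j v.
        vdiff (L m i (L n j v)) (L n j (L m i v))
          = vsmult ((of_int n * (of_nat i + q) - of_int m * (of_nat j + q))) (L (m + n) (i + j) v)) \<and>
     (\<forall>m i k j v.
        vdiff (L m i (G k j v)) (G k j (L m i v))
          = vsmult (((of_int k + 1/2) * (of_nat i + q) - of_int m * (of_nat j + q / 2)))
                   (G (m + k) (i + j) v)) \<and>
     (\<forall>k i r j v.
        vadd (G k i (G r j v)) (G r j (G k i v))
          = vsmult (2 * q) (L (k + r + 1) (i + j) v))"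

end

theory Submission
  imports Defs
begin

lemma vdiff_swap: "vdiff X Y = Z \<Longrightarrow> Y = vdiff X Z"
  by (cases X; cases Y; cases Z) (auto simp: vdiff_def)

theorem lemma5p2:
  fixes q lam a b :: complex
    and L G :: "int \<Rightarrow> nat \<Rightarrow> vec \<Rightarrow> vec"
  assumes q_nz: "q \<noteq> 0"
    and lam_nz: "lam \<noteq> 0"
    and module: "is_NSB_module q L G"
    and L0: "\<And>m i f. L m i (f, 0) =
        (smult (lam powi m)
           ([: delta i (0::nat) * (- of_int m * q * a) + delta q (-1) * delta i (1::nat) * b,
               delta i (0::nat) :] * pcompose f [: - of_int m * q, 1 :]), 0)"
    and L1: "\<And>m i g. L m i (0, g) =
        (0, smult (lam powi m)
           ([: delta i (0::nat) * (- of_int m * q * (a + 1/2)) + delta q (-1) * delta i (1::nat) * b,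
               delta i (0::nat) :] * pcompose g [: - of_int m * q, 1 :]))"
    and G00: "G 0 0 (1, 0) = (0, 1)"
    and G01: "G 0 1 (1, 0) = (0, 0)"
    and G10: "G 0 0 (0, 1) = (smult (q * lam) [: - q * a, 1 :], 0)"
    and G11: "G 0 1 (0, 1) = ([: 2 * q * lam * delta q (-1) * b :], 0)"
  shows "\<forall>k i. G k i (1, 0) = (0, [: lam powi k * delta i (0::nat) :]) \<and>
           G k i (0, 1) =
             (smult (q * lam powi (k + 1))
                [: delta i (0::nat) * (- 2 * (of_int k + 1/2) * q * a)
                     + 2 * delta q (-1) * delta i (1::nat) * b,
                   delta i (0::nat) :], 0)"
proof -
  note M = module[unfolded is_NSB_module_def]
  have Gadd: "\<And>k j v w. G k j (vadd v w) = vadd (G k j v) (G k j w)" using M by (elim conjE) (erule allE)+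
  have Gsm: "\<And>k j c v. G k j (vsmult c v) = vsmult c (G k j v)" using M by (elim conjE) (erule allE)+
  have G0f: "\<And>k j f. fst (G k j (f, 0)) = 0" using M by (elim conjE) (erule allE)+
  have G1s: "\<And>k j g. snd (G k j (0, g)) = 0" using M by (elim conjE) (erule allE)+
  have LG: "\<And>m i k j v. vdiff (L m i (G k j v)) (G k j (L m i v)) = vsmult (((of_int k + 1/2) * (of_nat i + q) - of_int m * (of_nat j + q / 2))) (G (m + k) (i + j) v)" using M by (elim conjE) (erule allE)+
  define P where "P k j = snd (G k j (1,0))" for k j
  define Q where "Q k j = fst (G k j (0,1))" for k j
  define s where "s k = [: -(of_int k + 1/2) * q, 1 :]" for k :: int
  define A where "A m i = [: delta i (0::nat) * (- of_int m * q * a) + delta q (-1) * delta i (1::nat) * b,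
               delta i (0::nat) :]" for m :: int and i :: nat
  define B where "B m i = [: delta i (0::nat) * (- of_int m * q * (a + 1/2)) + delta q (-1) * delta i (1::nat) * b,
               delta i (0::nat) :]" for m :: int and i :: nat
  have L0': "L m i (f,0) = (smult (lam powi m) (A m i * pcompose f [: - of_int m * q, 1 :]), 0)" for m i f
    by (simp add: L0 A_def)
  have L1': "L m i (0,g) = (0, smult (lam powi m) (B m i * pcompose g [: - of_int m * q, 1 :]))" for m i g
    by (simp add: L1 B_def)
  have GP: "G k j (1,0) = (0, P k j)" for k j using G0f[of k j 1] P_def by (metis prod.collapse)
  have GQ: "G k j (0,1) = (Q k j, 0)" for k j using G1s[of k j 1] Q_def by (metis prod.collapse)
  have L00a: "L 0 0 (f,0) = ([:0,1:] * f, 0)" for f by (simp add: L0 delta_def)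
  have L00b: "L 0 0 (0,g) = (0, [:0,1:] * g)" for g by (simp add: L1 delta_def)
  have shift: "G k j (L 0 0 v) = vdiff (L 0 0 (G k j v)) (vsmult ((of_int k + 1/2) * q) (G k j v))" for k j v
    using vdiff_swap[OF LG[of 0 0 k j v]] by simp
  have polyG0: "G k j (f,0) = (0, pcompose f (s k) * P k j)" for k j f
  proof (induct f rule: pCons_induct)
    case 0
    have "G k j (0,0) = G k j (vsmult 0 (1,0))" by (simp add: vsmult_def)
    also have "\<dots> = vsmult 0 (G k j (1,0))" by (rule Gsm)
    finally show ?case by (simp add: vsmult_def)
  next
    case (pCons c p)
    have "(pCons c p, 0) = vadd (vsmult c (1,0)) (L 0 0 (p,0))"
      by (simp add: vadd_def vsmult_def L00a)
    then have "G k j (pCons c p, 0) = vadd (vsmult c (0, P k j)) (vdiff (L 0 0 (0, pcompose p (s k) * P k j)) (vsmult ((of_int k + 1/2) * q) (0, pcompose p (s k) * P k j)))"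
      by (simp add: Gadd Gsm GP shift pCons(2))
    also have "\<dots> = (0, pcompose (pCons c p) (s k) * P k j)"
      by (simp add: L00b vadd_def vsmult_def vdiff_def s_def pcompose_pCons poly_eq_poly_eq_iff[symmetric] fun_eq_iff poly_pcompose; (simp add: algebra_simps)?)
    finally show ?case .
  qed
  have polyG1: "G k j (0,g) = (pcompose g (s k) * Q k j, 0)" for k j g
  proof (induct g rule: pCons_induct)
    case 0
    have "G k j (0,0) = G k j (vsmult 0 (0,1))" by (simp add: vsmult_def)
    also have "\<dots> = vsmult 0 (G k j (0,1))" by (rule Gsm)
    finally show ?case by (simp add: vsmult_def)
  next
    case (pCons c p)
    have "(0, pCons c p) = vadd (vsmult c (0,1)) (L 0 0 (0,p))"
      by (simp add: vadd_def vsmult_def L00b)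
    then have "G k j (0, pCons c p) = vadd (vsmult c (Q k j, 0)) (vdiff (L 0 0 (pcompose p (s k) * Q k j, 0)) (vsmult ((of_int k + 1/2) * q) (pcompose p (s k) * Q k j, 0)))"
      by (simp add: Gadd Gsm GQ shift pCons(2))
    also have "\<dots> = (pcompose (pCons c p) (s k) * Q k j, 0)"
      by (simp add: L00a vadd_def vsmult_def vdiff_def s_def pcompose_pCons poly_eq_poly_eq_iff[symmetric] fun_eq_iff poly_pcompose; (simp add: algebra_simps)?)
    finally show ?case .
  qed

  have BR0: "smult (lam powi m) (B m i * pcompose (P k j) [:- of_int m * q, 1:]) - pcompose (smult (lam powi m) (A m i)) (s k) * P k j
      = smult ((of_int k + 1/2) * (of_nat i + q) - of_int m * (of_nat j + q / 2)) (P (m+k) (i+j))" for m i k j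
    using LG[of m i k j "(1,0)"] by (simp add: GP L0' L1' polyG0 pcompose_1 vdiff_def vsmult_def)
  have BR1: "smult (lam powi m) (A m i * pcompose (Q k j) [:- of_int m * q, 1:]) - pcompose (smult (lam powi m) (B m i)) (s k) * Q k j
      = smult ((of_int k + 1/2) * (of_nat i + q) - of_int m * (of_nat j + q / 2)) (Q (m+k) (i+j))" for m i k j
    using LG[of m i k j "(0,1)"] by (simp add: GQ L0' L1' polyG1 pcompose_1 vdiff_def vsmult_def)
  define EP where "EP k i = [: lam powi k * delta i (0::nat) :]" for k :: int and i :: nat
  define EQ where "EQ k i = smult (q * lam powi (k + 1)) [: delta i (0::nat) * (- 2 * (of_int k + 1/2) * q * a) + 2 * delta q (-1) * delta i (1::nat) * b, delta i (0::nat) :]" for k :: int and i :: nat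
  have P00: "P 0 0 = 1" "P 0 1 = 0" "Q 0 0 = smult (q * lam) [: - q * a, 1 :]" "Q 0 1 = [: 2 * q * lam * delta q (-1) * b :]"
    using G00 G01 G10 G11 by (simp_all add: P_def Q_def)
  have R1P: "smult (lam powi m) (B m i * pcompose (P 0 0) [:- of_int m * q, 1:]) - pcompose (smult (lam powi m) (A m i)) (s 0) * P 0 0
      = smult ((of_int 0 + 1/2) * (of_nat i + q) - of_int m * (of_nat 0 + q / 2)) (EP m i)" for m i
    unfolding P00 A_def B_def s_def EP_def delta_def
    by (simp add: poly_eq_poly_eq_iff[symmetric] fun_eq_iff poly_pcompose; (simp add: algebra_simps)?)
  have R1Q: "smult (lam powi m) (A m i * pcompose (Q 0 0) [:- of_int m * q, 1:]) - pcompose (smult (lam powi m) (B m i)) (s 0) * Q 0 0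
      = smult ((of_int 0 + 1/2) * (of_nat i + q) - of_int m * (of_nat 0 + q / 2)) (EQ m i)" for m i
    unfolding P00 A_def B_def s_def EQ_def delta_def
    by (simp add: poly_eq_poly_eq_iff[symmetric] fun_eq_iff poly_pcompose power_int_add_1 lam_nz; (simp add: algebra_simps)?)
  have R2P: "smult (lam powi m) (B m i * pcompose (P 0 1) [:- of_int m * q, 1:]) - pcompose (smult (lam powi m) (A m i)) (s 0) * P 0 1
      = smult ((of_int 0 + 1/2) * (of_nat i + q) - of_int m * (of_nat 1 + q / 2)) (EP m (Suc i))" for m i
    unfolding P00 A_def B_def s_def EP_def delta_def
    by (simp add: poly_eq_poly_eq_iff[symmetric] fun_eq_iff poly_pcompose; (simp add: algebra_simps)?)
  have R2Q: "smult (lam powi m) (A m i * pcompose (Q 0 1) [:- of_int m * q, 1:]) - pcompose (smult (lam powi m) (B m i)) (s 0) * Q 0 1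
      = smult ((of_int 0 + 1/2) * (of_nat i + q) - of_int m * (of_nat 1 + q / 2)) (EQ m (Suc i))" for m i
    unfolding P00 A_def B_def s_def EQ_def delta_def
    by (simp add: poly_eq_poly_eq_iff[symmetric] fun_eq_iff poly_pcompose power_int_add_1 lam_nz; (simp add: algebra_simps)?)
  have R3P: "smult (lam powi 2) (B 2 0 * pcompose (EP (-1) 0) [:- of_int 2 * q, 1:]) - pcompose (smult (lam powi 2) (A 2 0)) (s (-1)) * EP (-1) 0
      = smult ((of_int (-1) + 1/2) * (of_nat 0 + q) - of_int 2 * (of_nat 0 + q / 2)) (EP 1 0)"
    unfolding A_def B_def s_def EP_def delta_def
    by (simp add: poly_eq_poly_eq_iff[symmetric] fun_eq_iff poly_pcompose power_int_add lam_nz; (simp add: algebra_simps power2_eq_square lam_nz)?)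
  have R3Q: "smult (lam powi 2) (A 2 0 * pcompose (EQ (-1) 0) [:- of_int 2 * q, 1:]) - pcompose (smult (lam powi 2) (B 2 0)) (s (-1)) * EQ (-1) 0
      = smult ((of_int (-1) + 1/2) * (of_nat 0 + q) - of_int 2 * (of_nat 0 + q / 2)) (EQ 1 0)"
    unfolding A_def B_def s_def EQ_def delta_def
    by (simp add: poly_eq_poly_eq_iff[symmetric] fun_eq_iff poly_pcompose power_int_add lam_nz; (simp add: algebra_simps power2_eq_square lam_nz)?)
  have gen: "P m i = EP m i \<and> Q m i = EQ m i" if mi: "i \<noteq> 0 \<or> m \<noteq> 1" for m i
  proof (cases "(of_int 0 + 1/2) * (of_nat i + q) - of_int m * (of_nat 0 + q / 2) = (0::complex)")
    case False
    have "smult ((of_int 0 + 1/2) * (of_nat i + q) - of_int m * (of_nat 0 + q / 2)) (P m i)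
        = smult ((of_int 0 + 1/2) * (of_nat i + q) - of_int m * (of_nat 0 + q / 2)) (EP m i)"
      using BR0[of m i 0 0] R1P[of m i] by simp
    moreover have "smult ((of_int 0 + 1/2) * (of_nat i + q) - of_int m * (of_nat 0 + q / 2)) (Q m i)
        = smult ((of_int 0 + 1/2) * (of_nat i + q) - of_int m * (of_nat 0 + q / 2)) (EQ m i)"
      using BR1[of m i 0 0] R1Q[of m i] by simp
    ultimately show ?thesis using False smult_cancel by blast
  next
    case True
    have "i \<noteq> 0"
    proof
      assume "i = 0"
      then have "m \<noteq> 1" using mi by simp
      then have "(1::complex) - of_int m \<noteq> 0" by simp
      then have "q * (1 - of_int m) \<noteq> 0" using q_nz by simp
      then show False using True \<open>i = 0\<close> by (simp add: algebra_simps)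
    qed
    then obtain i' where i': "i = Suc i'" by (cases i) auto
    have odd: "(of_int (2*m+1) :: complex) \<noteq> 0" by (simp only: of_int_eq_0_iff) presburger
    have "(of_int 0 + 1/2) * (of_nat i + q) - of_int m * (of_nat 0 + q / 2)
          - ((of_int 0 + 1/2) * (of_nat i' + q) - of_int m * (of_nat 1 + q / 2)) = (of_int (2*m+1) :: complex) / 2"
      unfolding i' by (simp add: algebra_simps)
    note dif = this
    have c2: "(of_int 0 + 1/2) * (of_nat i' + q) - of_int m * (of_nat 1 + q / 2) \<noteq> (0::complex)"
    proof
      assume Y0: "(of_int 0 + 1/2) * (of_nat i' + q) - of_int m * (of_nat 1 + q / 2) = (0::complex)"
      have "(0::complex) - 0 = of_int (2*m+1) / 2" using dif unfolding True Y0 .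
      then show False using odd by simp
    qed
    have "smult ((of_int 0 + 1/2) * (of_nat i' + q) - of_int m * (of_nat 1 + q / 2)) (P m i)
        = smult ((of_int 0 + 1/2) * (of_nat i' + q) - of_int m * (of_nat 1 + q / 2)) (EP m i)"
      using BR0[of m i' 0 1] R2P[of m i'] unfolding i' by simp
    moreover have "smult ((of_int 0 + 1/2) * (of_nat i' + q) - of_int m * (of_nat 1 + q / 2)) (Q m i)
        = smult ((of_int 0 + 1/2) * (of_nat i' + q) - of_int m * (of_nat 1 + q / 2)) (EQ m i)"
      using BR1[of m i' 0 1] R2Q[of m i'] unfolding i' by simp
    ultimately show ?thesis using c2 smult_cancel by blast
  qed
  have spec: "P 1 0 = EP 1 0 \<and> Q 1 0 = EQ 1 0"
  proof -
    have c3: "(of_int (-1) + 1/2) * (of_nat 0 + q) - of_int 2 * (of_nat 0 + q / 2) \<noteq> (0::complex)"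
      using q_nz by simp
    have h: "P (-1) 0 = EP (-1) 0" "Q (-1) 0 = EQ (-1) 0" using gen[of 0 "-1"] by auto
    have "smult ((of_int (-1) + 1/2) * (of_nat 0 + q) - of_int 2 * (of_nat 0 + q / 2)) (P 1 0)
        = smult ((of_int (-1) + 1/2) * (of_nat 0 + q) - of_int 2 * (of_nat 0 + q / 2)) (EP 1 0)"
      using BR0[of 2 0 "-1" 0] R3P unfolding h by simp
    moreover have "smult ((of_int (-1) + 1/2) * (of_nat 0 + q) - of_int 2 * (of_nat 0 + q / 2)) (Q 1 0)
        = smult ((of_int (-1) + 1/2) * (of_nat 0 + q) - of_int 2 * (of_nat 0 + q / 2)) (EQ 1 0)"
      using BR1[of 2 0 "-1" 0] R3Q unfolding h by simp
    ultimately show ?thesis using c3 smult_cancel by blast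
  qed
  have all: "P m i = EP m i \<and> Q m i = EQ m i" for m i
    using gen spec by (cases "i = 0 \<and> m = 1") auto
  show ?thesis
  proof (intro allI conjI)
    fix k i
    show "G k i (1, 0) = (0, [: lam powi k * delta i (0::nat) :])"
      using GP[of k i] all[of k i] by (simp add: EP_def)
    show "G k i (0, 1) = (smult (q * lam powi (k + 1))
                [: delta i (0::nat) * (- 2 * (of_int k + 1/2) * q * a)
                     + 2 * delta q (-1) * delta i (1::nat) * b,
                   delta i (0::nat) :], 0)"
      using GQ[of k i] all[of k i] by (simp add: EQ_def)
  qed
qed

end
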